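(* Let $a:[0,\infty)\times\mathcal T\to[0,\infty)$ be convex in its first argument with $\lim_{x\uparrow\infty}a(x,t_n)/x<R<\infty$ for each $n$. Suppose the reals $e^1_{j,n},e^2_{j,n},v_{j,n}$ ($0\le j\le J+1$, $1\le n\le N$), $d^1_{j,n},d^2_{j,n}$ ($0\le j\le J+1$, $1\le n\le N-1$) satisfy the feasibility conditions of $\mathbf L_H^{\mathcal X,\infty,\mathcal T}$. For each $n$ let $\bar e^1_n,\bar e^2_n,\bar v_n$ be the extended linear interpolations of $(e^1_{j,n})_{0\le j\le J+1}$, $(e^2_{j,n})_{0\le j\le J+1}$, $(v_{j,n})_{0\le j\le J+1}$, let $\tilde d^\delta_n$ be the mixed interpolation on $[0,x_J]$ and for $x>x_J$ set $\tilde d^1_n(x)=\min\{d^1_{J,n},e^1_{J+1,n}\}$ and $\tilde d^2_n(x)=\min\{d^2_{J,n},e^1_{J+1,n}-v_{J+1,n}\}$. Set also $\bar e^1_N\equiv0\equiv\bar e^2_1$. Then \[\bar v_n(x)\ge a(x,t_n)\quad (x\ge0,\ 1\le n\le N),\] \[\bar e^1_n(x)+\bar e^2_{n+1}(y)+(y-x)\tilde d^1_n(x)\ge0\quad(x,y\ge0,\ 1\le n<N),\] \[\bar e^1_n(x)+\bar e^2_{n+1}(y)+(y-x)\tilde d^2_n(x)-\bar v_n(x)+\bar v_{n+1}(y)\ge0\quad(x,y\ge0,\ 1\le n<N).\]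
   Context: Fix $N\ge1$, $J\ge1$, times $0=t_0<t_1<\dots<t_N=T$, $\mathcal T=\{t_1,\dots,t_N\}$, strikes $0=x_0<x_1<\dots<x_J$, and nonnegative numbers $\hat p_{j,n}$ ($0\le j\le J+1$, $1\le n\le N$). Write $\ell_n=\lim_{x\uparrow\infty}a(x,t_n)/x$. $\mathbf L_H^{\mathcal X,\infty,\mathcal T}$: over reals $e^1_{j,n},e^2_{j,n},v_{j,n}$ ($0\le j\le J+1$, $1\le n\le N$), $d^1_{j,n},d^2_{j,n}$ ($0\le j\le J+1$, $1\le n\le N-1$), with $e^1_{j,N}=e^2_{j,1}=0$ for all $j$, minimise $\sum_{n}\sum_{j=0}^{J+1}(e^1_{j,n}+e^2_{j,n})\hat p_{j,n}+\sum_{j=0}^{J+1}v_{j,N}\hat p_{j,N}$ subject to $v_{j,n}\ge0$ and, for $1\le n\le N$ in (i) and $1\le n\le N-1$ in (ii),(iii): (i) $v_{j,n}\ge a(x_j,t_n)$ for $0\le j\le J$, and $v_{J+1,n}\ge\ell_n$; (ii) $e^1_{j,n}+e^2_{k,n+1}+(x_k-x_j)d^1_{j,n}\ge0$ ($0\le j,k\le J$); $e^1_{J+1,n}-d^1_{J+1,n}\ge0$; $e^2_{J+1,n+1}+d^1_{j,n}\ge0$ ($0\le j\le J$); $e^1_{J+1,n}+e^2_{J+1,n+1}\ge0$; (iii) $e^1_{j,n}+e^2_{k,n+1}+(x_k-x_j)d^2_{j,n}-v_{j,n}+v_{k,n+1}\ge0$ ($0\le j,k\le J$); $e^1_{J+1,n}-d^2_{J+1,n}-v_{J+1,n}\ge0$;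 $e^2_{J+1,n+1}+d^2_{j,n}+v_{J+1,n+1}\ge0$ ($0\le j\le J$); $e^1_{J+1,n}+e^2_{J+1,n+1}-v_{J+1,n}+v_{J+1,n+1}\ge0$. Extended linear interpolation of $(h_0,\dots,h_{J+1})$: $\bar h(x_j)=h_j$; $\bar h(x)=\frac{x_{j+1}-x}{x_{j+1}-x_j}h_j+\frac{x-x_j}{x_{j+1}-x_j}h_{j+1}$ for $x_j<x<x_{j+1}$, $j<J$; $\bar h(x)=h_J+(x-x_J)h_{J+1}$ for $x>x_J$. Mixed interpolation on $[0,x_J]$ ($\delta\in\{1,2\}$, $1\le n\le N-1$): with $u^1_{j,n}=\frac{e^1_{j+1,n}-e^1_{j,n}}{x_{j+1}-x_j}$, $u^2_{j,n}=\frac{(e^1_{j+1,n}-v_{j+1,n})-(e^1_{j,n}-v_{j,n})}{x_{j+1}-x_j}$ ($0\le j<J$), set $\tilde d^\delta_n(x_j)=d^\delta_{j,n}$ and for $x\in(x_j,x_{j+1})$: $\tilde d^\delta_n(x)=d^\delta_{j,n}$ if $d^\delta_{j,n}\le u^\delta_{j,n}$; $=d^\delta_{j+1,n}$ if $d^\delta_{j,n}>u^\delta_{j,n}$ and $d^\delta_{j+1,n}\ge u^\delta_{j,n}$; $=u^\delta_{j,n}$ if $d^\delta_{j+1,n}<u^\delta_{j,n}<d^\delta_{j,n}$. *)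

theory Defs
  imports "HOL-Analysis.Analysis"
begin

text \<open>Extended linear interpolation of h 0, ..., h (J+1) on the grid X 0 < ... < X J;
  the last value h (J+1) is the slope beyond X J.  Only meaningful for y \<ge> 0 = X 0.\<close>
definition ext_interp :: "(nat \<Rightarrow> real) \<Rightarrow> nat \<Rightarrow> (nat \<Rightarrow> real) \<Rightarrow> real \<Rightarrow> real" where
  "ext_interp X J h y =
     (if X J < y then h J + (y - X J) * h (Suc J)
      else if (\<exists>j\<le>J. y = X j) then h (THE j. j \<le> J \<and> y = X j)
      else (let j = (THE j. j < J \<and> X j < y \<and> y < X (Suc j)) in
              (X (Suc j) - y) / (X (Suc j) - X j) * h j
            + (y - X j) / (X (Suc j) - X j) * h (Suc j)))"

definition mixed_interp :: "(nat \<Rightarrow> real) \<Rightarrow> nat \<Rightarrow> (nat \<Rightarrow> real) \<Rightarrow> (nat \<Rightarrow> real) \<Rightarrow> real \<Rightarrow> real" where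
  "mixed_interp X J d u y =
     (if (\<exists>j\<le>J. y = X j) then d (THE j. j \<le> J \<and> y = X j)
      else (let j = (THE j. j < J \<and> X j < y \<and> y < X (Suc j)) in
              if d j \<le> u j then d j
              else if u j \<le> d (Suc j) then d (Suc j)
              else u j))"

end

theory Submission
  imports Defs "HOL-Real_Asymp.Real_Asymp"
begin


lemma grid_less:
  assumes xm: "\<forall>j<J. x j < (x (Suc j)::real)" and "i < j" "j \<le> J"
  shows "x i < x j"
  using assms(2,3)
proof (induction j)
  case 0 then show ?case by simp
next
  case (Suc j)
  then have "x j < x (Suc j)" using xm by simp
  then show ?case using Suc by (cases "i = j") auto
qed

lemma grid_le:
  assumes xm: "\<forall>j<J. x j < (x (Suc j)::real)" and "i \<le> j" "j \<le> J"
  shows "x i \<le> x j"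
  using grid_less[OF xm, of i j] assms by (cases "i = j") auto

lemma grid_inj:
  assumes xm: "\<forall>j<J. x j < (x (Suc j)::real)" and "i \<le> J" "j \<le> J" "x i = x j"
  shows "i = j"
  using grid_less[OF xm, of i j] grid_less[OF xm, of j i] assms
  by (metis less_irrefl nat_neq_iff)

lemma ext_grid:
  assumes xm: "\<forall>j<J. x j < (x (Suc j)::real)" and j: "j \<le> J"
  shows "ext_interp x J h (x j) = h j"
proof -
  have "\<not> x J < x j" using grid_le[OF xm j] by simp
  moreover have "(THE i. i \<le> J \<and> x j = x i) = j"
    using grid_inj[OF xm] j by (intro the_equality) auto
  ultimately show ?thesis using j unfolding ext_interp_def by auto
qed

lemma ext_tail:
  "x J < y \<Longrightarrow> ext_interp x J h y = h J + (y - x J) * h (Suc J)"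
  by (simp add: ext_interp_def)

lemma not_grid:
  assumes xm: "\<forall>j<J. x j < (x (Suc j)::real)" and j: "j < J" and y: "x j < y" "y < x (Suc j)"
  shows "\<not> (\<exists>i\<le>J. y = x i)"
proof
  assume "\<exists>i\<le>J. y = x i"
  then obtain i where i: "i \<le> J" "y = x i" by blast
  show False
  proof (cases "i \<le> j")
    case True then show False using grid_le[OF xm True] j y i by simp
  next
    case False then have "Suc j \<le> i" by simp
    then show False using grid_le[OF xm, of "Suc j" i] i y by simp
  qed
qed

lemma interval_the:
  assumes xm: "\<forall>j<J. x j < (x (Suc j)::real)" and j: "j < J" and y: "x j < y" "y < x (Suc j)"
  shows "(THE i. i < J \<and> x i < y \<and> y < x (Suc i)) = j"
proof (rule the_equality)
  show "j < J \<and> x j < y \<and> y < x (Suc j)" using assms by simp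
next
  fix i assume i: "i < J \<and> x i < y \<and> y < x (Suc i)"
  show "i = j"
  proof (rule ccontr)
    assume "i \<noteq> j"
    then consider "i < j" | "j < i" by linarith
    then show False
    proof cases
      case 1 then have "x (Suc i) \<le> x j" using grid_le[OF xm, of "Suc i" j] j by simp
      then show False using i y by simp
    next
      case 2 then have "x (Suc j) \<le> x i" using grid_le[OF xm, of "Suc j" i] i by simp
      then show False using i y by simp
    qed
  qed
qed

lemma ext_open:
  assumes xm: "\<forall>j<J. x j < (x (Suc j)::real)" and j: "j < J" and y: "x j < y" "y < x (Suc j)"
  shows "ext_interp x J h y = h j + (y - x j) * ((h (Suc j) - h j) / (x (Suc j) - x j))"
proof -
  have "x (Suc j) \<le> x J" using grid_le[OF xm, of "Suc j" J] j by simp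
  then have "\<not> x J < y" using y by simp
  then have "ext_interp x J h y = (x (Suc j) - y) / (x (Suc j) - x j) * h j
            + (y - x j) / (x (Suc j) - x j) * h (Suc j)"
    unfolding ext_interp_def using not_grid[OF assms] interval_the[OF assms] by (auto simp: Let_def)
  also have "\<dots> = h j + (y - x j) * ((h (Suc j) - h j) / (x (Suc j) - x j))"
  proof -
    have nz: "x (Suc j) - x j \<noteq> 0" using y by simp
    show ?thesis using nz by (simp add: divide_simps) (simp add: algebra_simps)
  qed
  finally show ?thesis .
qed

lemma ext_seg:
  assumes xm: "\<forall>j<J. x j < (x (Suc j)::real)" and j: "j < J" and y: "x j \<le> y" "y \<le> x (Suc j)"
  shows "ext_interp x J h y = h j + (y - x j) * ((h (Suc j) - h j) / (x (Suc j) - x j))"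
proof -
  have d: "x j < x (Suc j)" using xm j by simp
  consider "y = x j" | "y = x (Suc j)" | "x j < y \<and> y < x (Suc j)" using y by linarith
  then show ?thesis
  proof cases
    case 1 then show ?thesis using ext_grid[OF xm, of j] j by simp
  next
    case 2 then show ?thesis using ext_grid[OF xm, of "Suc j"] j d by simp
  next
    case 3 then show ?thesis using ext_open[OF xm j] by simp
  qed
qed

lemma mixed_grid:
  assumes xm: "\<forall>j<J. x j < (x (Suc j)::real)" and j: "j \<le> J"
  shows "mixed_interp x J d u (x j) = d j"
proof -
  have "(THE i. i \<le> J \<and> x j = x i) = j"
    using grid_inj[OF xm] j by (intro the_equality) auto
  then show ?thesis using j unfolding mixed_interp_def by auto
qed

lemma mixed_open:
  assumes xm: "\<forall>j<J. x j < (x (Suc j)::real)" and j: "j < J" and y: "x j < y" "y < x (Suc j)"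
  shows "mixed_interp x J d u y = (if d j \<le> u j then d j else if u j \<le> d (Suc j) then d (Suc j) else u j)"
  unfolding mixed_interp_def using not_grid[OF assms] interval_the[OF assms] by (auto simp: Let_def)

lemma find_seg:
  fixes x :: "nat \<Rightarrow> real"
  shows "1 \<le> m \<Longrightarrow> x 0 \<le> y \<Longrightarrow> y \<le> x m \<Longrightarrow> \<exists>j<m. x j \<le> y \<and> y \<le> x (Suc j)"
proof (induction m)
  case 0 then show ?case by simp
next
  case (Suc m)
  show ?case
  proof (cases "m = 0")
    case True then show ?thesis using Suc by auto
  next
    case False
    show ?thesis
    proof (cases "y \<le> x m")
      case True then show ?thesis using Suc False by (meson less_SucI less_one not_less)
    next
      case False then show ?thesis using Suc by auto
    qed
  qed
qed

lemma ext_lin: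
  "ext_interp x J (\<lambda>j. f j + c * g j) y = ext_interp x J f y + c * ext_interp x J g y"
proof -
  define i where "i = (THE j. j \<le> J \<and> y = x j)"
  define k where "k = (THE j. j < J \<and> x j < y \<and> y < x (Suc j))"
  have e: "ext_interp x J h y = (if x J < y then h J + (y - x J) * h (Suc J)
      else if (\<exists>j\<le>J. y = x j) then h i else
              (x (Suc k) - y) / (x (Suc k) - x k) * h k
            + (y - x k) / (x (Suc k) - x k) * h (Suc k))" for h
    unfolding ext_interp_def Let_def i_def k_def by simp
  show ?thesis
  proof (cases "x J < y")
    case True then show ?thesis unfolding e by (simp add: algebra_simps)
  next
    case False
    show ?thesis
    proof (cases "\<exists>j\<le>J. y = x j")
      case True then show ?thesis using False unfolding e by simp
    next
      case F2: False
      define p where "p = (x (Suc k) - y) / (x (Suc k) - x k)"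
      define q where "q = (y - x k) / (x (Suc k) - x k)"
      have "ext_interp x J h y = p * h k + q * h (Suc k)" for h
        unfolding e p_def q_def using False F2 by (simp add: if_not_P)
      then show ?thesis by (simp add: algebra_simps)
    qed
  qed
qed

lemma pl_nonneg:
  assumes xm: "\<forall>j<J. x j < (x (Suc j)::real)" and x0: "x 0 = 0" and J: "J \<ge> 1"
    and V: "\<forall>k\<le>J. G k + \<alpha> * x k + \<beta> \<ge> 0" and T: "G (Suc J) + \<alpha> \<ge> 0" and z: "z \<ge> 0"
  shows "ext_interp x J G z + \<alpha> * z + \<beta> \<ge> 0"
proof (cases "x J < z")
  case True
  have "ext_interp x J G z + \<alpha> * z + \<beta> = (G J + \<alpha> * x J + \<beta>) + (z - x J) * (G (Suc J) + \<alpha>)"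
    using ext_tail[of x J z G, OF True] by (simp add: algebra_simps)
  also have "\<dots> \<ge> 0"
  proof -
    have "G J + \<alpha> * x J + \<beta> \<ge> 0" using V by simp
    moreover have "(z - x J) * (G (Suc J) + \<alpha>) \<ge> 0" using T True by simp
    ultimately show ?thesis by linarith
  qed
  finally show ?thesis .
next
  case False
  then obtain j where j: "j < J" "x j \<le> z" "z \<le> x (Suc j)" using find_seg[of J x z] J x0 z by auto
  define \<Delta> where "\<Delta> = x (Suc j) - x j"
  have \<Delta>: "\<Delta> > 0" using xm j unfolding \<Delta>_def by simp
  define l where "l = (z - x j) / \<Delta>"
  have l: "0 \<le> l" "l \<le> 1" using j \<Delta> unfolding l_def \<Delta>_def by (auto simp: field_simps)
  have zl: "z = x j + l * \<Delta>" using \<Delta> unfolding l_def by simp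
  have "ext_interp x J G z + \<alpha> * z + \<beta> = G j + l * (G (Suc j) - G j) + \<alpha> * z + \<beta>"
    using ext_seg[OF xm j] \<Delta> unfolding l_def \<Delta>_def by simp
  also have "\<dots> = (1 - l) * (G j + \<alpha> * x j + \<beta>) + l * (G (Suc j) + \<alpha> * x (Suc j) + \<beta>)"
    unfolding zl \<Delta>_def by (simp add: algebra_simps)
  also have "\<dots> \<ge> 0"
  proof -
    have "(1 - l) * (G j + \<alpha> * x j + \<beta>) \<ge> 0" using V j l by simp
    moreover have "l * (G (Suc j) + \<alpha> * x (Suc j) + \<beta>) \<ge> 0" using V j l by simp
    ultimately show ?thesis by linarith
  qed
  finally show ?thesis .
qed



lemma core:
  fixes x F G d :: "nat \<Rightarrow> real"
  assumes xm: "\<forall>j<J. x j < x (Suc j)" and x0: "x 0 = 0" and J: "J \<ge> 1"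
    and A: "\<forall>j\<le>J. \<forall>k\<le>J. F j + G k + (x k - x j) * d j \<ge> 0"
    and B: "\<forall>j\<le>J. G (Suc J) + d j \<ge> 0"
    and C: "F (Suc J) + G (Suc J) \<ge> 0"
    and y: "y \<ge> 0" and z: "z \<ge> 0"
  shows "ext_interp x J F y + ext_interp x J G z + (z - y) *
     (if y \<le> x J then mixed_interp x J d (\<lambda>j. (F (Suc j) - F j) / (x (Suc j) - x j)) y
      else min (d J) (F (Suc J))) \<ge> 0"
proof -
  define u where "u = (\<lambda>j. (F (Suc j) - F j) / (x (Suc j) - x j))"
  define D where "D = (if y \<le> x J then mixed_interp x J d u y else min (d J) (F (Suc J)))"
  have S2: "ext_interp x J F y + G k + (x k - y) * D \<ge> 0" if k: "k \<le> J" for k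
  proof (cases "x J < y")
    case True
    define m where "m = min (d J) (F (Suc J))"
    have D: "D = m" using True unfolding D_def m_def by simp
    have "ext_interp x J F y + G k + (x k - y) * D
        = (F J + G k + (x k - x J) * m) + (y - x J) * (F (Suc J) - m)"
      using ext_tail[of x J y F, OF True] D by (simp add: algebra_simps)
    moreover have "F J + G k + (x k - x J) * m \<ge> 0"
    proof -
      have "x k \<le> x J" using grid_le[OF xm k] by simp
      then have "(x k - x J) * m \<ge> (x k - x J) * d J" unfolding m_def
        by (intro mult_left_mono_neg) auto
      then show ?thesis using A k by force
    qed
    moreover have "(y - x J) * (F (Suc J) - m) \<ge> 0" using True unfolding m_def by simp
    ultimately show ?thesis by linarith
  next
    case False
    then obtain j where j: "j < J" "x j \<le> y" "y \<le> x (Suc j)" using find_seg[of J x y] J x0 y by auto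
    have \<Delta>: "x (Suc j) - x j > 0" using xm j by simp
    have Fy: "ext_interp x J F y = F j + (y - x j) * u j"
      using ext_seg[OF xm j] unfolding u_def by simp
    have FS: "F (Suc j) = F j + (x (Suc j) - x j) * u j" using \<Delta> unfolding u_def by simp
    have Aj: "F j + G k + (x k - x j) * d j \<ge> 0" using A j k by simp
    have Aj1: "F (Suc j) + G k + (x k - x (Suc j)) * d (Suc j) \<ge> 0" using A j k by simp
    consider "y = x j" | "y = x (Suc j)" | "x j < y \<and> y < x (Suc j)" using j by linarith
    then show ?thesis
    proof cases
      case 1
      have "D = d j" using 1 False mixed_grid[OF xm, of j d u] j unfolding D_def by simp
      then show ?thesis using Aj Fy 1 by simp
    next
      case 2
      have "D = d (Suc j)" using 2 False mixed_grid[OF xm, of "Suc j" d u] j unfolding D_def by simp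
      moreover have "ext_interp x J F y = F (Suc j)" using 2 ext_grid[OF xm, of "Suc j"] j by simp
      ultimately show ?thesis using Aj1 2 by simp
    next
      case 3
      have M: "D = (if d j \<le> u j then d j else if u j \<le> d (Suc j) then d (Suc j) else u j)"
        using 3 False mixed_open[OF xm j(1), of y d u] unfolding D_def by simp
      show ?thesis
      proof (cases "d j \<le> u j")
        case True
        have "ext_interp x J F y + G k + (x k - y) * D
            = (F j + G k + (x k - x j) * d j) + (y - x j) * (u j - d j)"
          using True M Fy by (simp add: algebra_simps)
        moreover have "(y - x j) * (u j - d j) \<ge> 0" using True 3 by simp
        ultimately show ?thesis using Aj by linarith
      next
        case nT: False
        show ?thesis
        proof (cases "u j \<le> d (Suc j)")
          case True
          have "ext_interp x J F y + G k + (x k - y) * D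
              = (F (Suc j) + G k + (x k - x (Suc j)) * d (Suc j)) + (x (Suc j) - y) * (d (Suc j) - u j)"
            using True nT M Fy FS by (simp add: algebra_simps)
          moreover have "(x (Suc j) - y) * (d (Suc j) - u j) \<ge> 0" using True 3 by simp
          ultimately show ?thesis using Aj1 by linarith
        next
          case False
          have e: "ext_interp x J F y + G k + (x k - y) * D = F j + G k + (x k - x j) * u j"
            using False nT M Fy by (simp add: algebra_simps)
          show ?thesis
          proof (cases "k \<le> j")
            case True
            have "x k \<le> x j" using grid_le[OF xm True] j by simp
            then have "(x k - x j) * u j \<ge> (x k - x j) * d j" using nT
              by (intro mult_left_mono_neg) auto
            then show ?thesis using e Aj by linarith
          next
            case kF: False
            have "x (Suc j) \<le> x k" using grid_le[OF xm, of "Suc j" k] kF k by simp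
            then have "(x k - x (Suc j)) * u j \<ge> (x k - x (Suc j)) * d (Suc j)" using False
              by (intro mult_left_mono) auto
            moreover have "F j + G k + (x k - x j) * u j = F (Suc j) + G k + (x k - x (Suc j)) * u j"
              using FS by (simp add: algebra_simps)
            ultimately show ?thesis using e Aj1 by linarith
          qed
        qed
      qed
    qed
  qed
  have T: "G (Suc J) + D \<ge> 0"
  proof (cases "x J < y")
    case True
    then show ?thesis using B C J unfolding D_def by (auto simp: min_def)
  next
    case False
    then obtain j where j: "j < J" "x j \<le> y" "y \<le> x (Suc j)" using find_seg[of J x y] J x0 y by auto
    consider "y = x j" | "y = x (Suc j)" | "x j < y \<and> y < x (Suc j)" using j by linarith
    then show ?thesis
    proof cases
      case 1
      have "D = d j" using 1 False mixed_grid[OF xm, of j d u] j unfolding D_def by simp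
      then show ?thesis using B j by simp
    next
      case 2
      have "D = d (Suc j)" using 2 False mixed_grid[OF xm, of "Suc j" d u] j unfolding D_def by simp
      then show ?thesis using B j by simp
    next
      case 3
      have M: "D = (if d j \<le> u j then d j else if u j \<le> d (Suc j) then d (Suc j) else u j)"
        using 3 False mixed_open[OF xm j(1), of y d u] unfolding D_def by simp
      have "G (Suc J) + d j \<ge> 0" "G (Suc J) + d (Suc j) \<ge> 0" using B j by auto
      then show ?thesis using M by (auto split: if_splits)
    qed
  qed
  have "ext_interp x J G z + D * z + (ext_interp x J F y - y * D) \<ge> 0"
  proof (rule pl_nonneg[of J x G D, OF xm x0 J _ T z])
    show "\<forall>k\<le>J. 0 \<le> G k + D * x k + (ext_interp x J F y - y * D)"
      using S2 by (simp add: algebra_simps)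
  qed
  then show ?thesis unfolding D_def[symmetric] u_def[symmetric] by (simp add: algebra_simps)
qed



lemma aux_cc: "(b - a) / D * s + a = (1 - s / D) * a + (s / D) * (b::real)"
  by (simp add: algebra_simps diff_divide_distrib)

lemma vbar_ge:
  fixes x v :: "nat \<Rightarrow> real" and f :: "real \<Rightarrow> real"
  assumes xm: "\<forall>j<J. x j < x (Suc j)" and x0: "x 0 = 0" and J: "J \<ge> 1"
    and cv: "convex_on {0..} f" and lim: "((\<lambda>y. f y / y) \<longlongrightarrow> l) at_top"
    and V: "\<forall>j\<le>J. v j \<ge> f (x j)" and VL: "v (Suc J) \<ge> l" and y: "y \<ge> 0"
  shows "ext_interp x J v y \<ge> f y"
proof (cases "x J < y")
  case True
  define c where "c = x J"
  have c0: "c \<ge> 0" using grid_le[OF xm, of 0 J] x0 unfolding c_def by simp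
  have cy: "c < y" using True c_def by simp
  define g where "g = (\<lambda>w. (f w - f c) / (w - c))"
  have ev: "eventually (\<lambda>w. (f y - f c) / (y - c) \<le> g w) at_top"
    unfolding eventually_at_top_linorder
  proof (intro exI allI impI)
    fix w assume w: "w \<ge> y"
    have "convex_on {c..w} f"
      by (rule convex_on_subset[OF cv]) (use c0 in auto)
    from convex_onD_Icc'[OF this, of y] w cy
    have "f y \<le> (f w - f c) / (w - c) * (y - c) + f c" by simp
    then have "f y - f c \<le> g w * (y - c)" unfolding g_def by simp
    then show "(f y - f c) / (y - c) \<le> g w" using cy by (simp add: pos_divide_le_eq)
  qed
  have lg: "(g \<longlongrightarrow> l * 1 - 0) at_top"
  proof -
    have "((\<lambda>w. f w / w * (w / (w - c)) - f c / (w - c)) \<longlongrightarrow> l * 1 - 0) at_top"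
    proof (intro tendsto_diff tendsto_mult lim)
      show "((\<lambda>w. w / (w - c)) \<longlongrightarrow> 1) at_top" by real_asymp
      show "((\<lambda>w. f c / (w - c)) \<longlongrightarrow> 0) at_top" by real_asymp
    qed
    moreover have "eventually (\<lambda>w. f w / w * (w / (w - c)) - f c / (w - c) = g w) at_top"
      unfolding eventually_at_top_linorder
    proof (intro exI allI impI)
      fix w assume w: "w \<ge> c + 1"
      then have "w \<noteq> 0" "w - c \<noteq> 0" using c0 by auto
      then show "f w / w * (w / (w - c)) - f c / (w - c) = g w"
      proof -
        have "f w / w * (w / (w - c)) = f w / (w - c)" using \<open>w \<noteq> 0\<close> by simp
        then show ?thesis unfolding g_def by (simp add: diff_divide_distrib)
      qed
    qed
    ultimately show ?thesis by (rule Lim_transform_eventually)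
  qed
  have "(f y - f c) / (y - c) \<le> l"
    using tendsto_lowerbound[OF lg ev] by simp
  then have "f y - f c \<le> l * (y - c)" using cy by (simp add: pos_divide_le_eq)
  moreover have "l * (y - c) \<le> v (Suc J) * (y - c)" using VL cy by (simp add: mult_right_mono)
  moreover have "f c \<le> v J" using V unfolding c_def by simp
  ultimately show ?thesis using ext_tail[of x J y v, OF True] unfolding c_def by (simp add: algebra_simps)
next
  case False
  then obtain j where j: "j < J" "x j \<le> y" "y \<le> x (Suc j)" using find_seg[of J x y] J x0 y by auto
  have \<Delta>: "x (Suc j) - x j > 0" using xm j by simp
  have xj0: "x j \<ge> 0" using grid_le[OF xm, of 0 j] x0 j by simp
  have "convex_on {x j..x (Suc j)} f"
    by (rule convex_on_subset[OF cv]) (use xj0 in auto)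
  from convex_onD_Icc'[OF this, of y] j
  have fy: "f y \<le> (f (x (Suc j)) - f (x j)) / (x (Suc j) - x j) * (y - x j) + f (x j)" by simp
  define l where "l = (y - x j) / (x (Suc j) - x j)"
  have l: "0 \<le> l" "l \<le> 1" using j \<Delta> unfolding l_def by (auto simp: field_simps)
  have "(f (x (Suc j)) - f (x j)) / (x (Suc j) - x j) * (y - x j) + f (x j)
      = (1 - l) * f (x j) + l * f (x (Suc j))" unfolding l_def by (rule aux_cc)
  also have "\<dots> \<le> (1 - l) * v j + l * v (Suc j)"
    using V j l by (intro add_mono mult_left_mono) auto
  also have "\<dots> = ext_interp x J v y"
    using ext_seg[OF xm j] aux_cc[of "v (Suc j)" "v j" "x (Suc j) - x j" "y - x j"] unfolding l_def
    by (simp add: algebra_simps)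
  finally show ?thesis using fy by simp
qed

theorem mainTheorem11:
  fixes N J :: nat
    and t :: "nat \<Rightarrow> real"
    and x :: "nat \<Rightarrow> real"
    and a :: "real \<Rightarrow> real \<Rightarrow> real"
    and ell :: "nat \<Rightarrow> real" and R :: real
    and e1 e2 v d1 d2 :: "nat \<Rightarrow> nat \<Rightarrow> real"
  assumes N: "N \<ge> 1" and J: "J \<ge> 1"
    and t0: "t 0 = 0" and t_mono: "\<forall>n<N. t n < t (Suc n)"
    and x0: "x 0 = 0" and x_mono: "\<forall>j<J. x j < x (Suc j)"
    and a_nonneg: "\<forall>n\<in>{1..N}. \<forall>y\<ge>0. a y (t n) \<ge> 0"
    and a_convex: "\<forall>n\<in>{1..N}. convex_on {0..} (\<lambda>y. a y (t n))"
    and ell_lim: "\<forall>n\<in>{1..N}. ((\<lambda>y. a y (t n) / y) \<longlongrightarrow> ell n) at_top"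
    and ell_R: "\<forall>n\<in>{1..N}. ell n < R"
    and e1_N: "\<forall>j. e1 j N = 0" and e2_1: "\<forall>j. e2 j 1 = 0"
    and v_nonneg: "\<forall>n\<in>{1..N}. \<forall>j\<le>Suc J. v j n \<ge> 0"
    and i_a: "\<forall>n\<in>{1..N}. \<forall>j\<le>J. v j n \<ge> a (x j) (t n)"
    and i_l: "\<forall>n\<in>{1..N}. v (Suc J) n \<ge> ell n"
    and ii_1: "\<forall>n\<in>{1..N-1}. \<forall>j\<le>J. \<forall>k\<le>J.
                 e1 j n + e2 k (Suc n) + (x k - x j) * d1 j n \<ge> 0"
    and ii_2: "\<forall>n\<in>{1..N-1}. e1 (Suc J) n - d1 (Suc J) n \<ge> 0"
    and ii_3: "\<forall>n\<in>{1..N-1}. \<forall>j\<le>J. e2 (Suc J) (Suc n) + d1 j n \<ge> 0"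
    and ii_4: "\<forall>n\<in>{1..N-1}. e1 (Suc J) n + e2 (Suc J) (Suc n) \<ge> 0"
    and iii_1: "\<forall>n\<in>{1..N-1}. \<forall>j\<le>J. \<forall>k\<le>J.
                 e1 j n + e2 k (Suc n) + (x k - x j) * d2 j n - v j n + v k (Suc n) \<ge> 0"
    and iii_2: "\<forall>n\<in>{1..N-1}. e1 (Suc J) n - d2 (Suc J) n - v (Suc J) n \<ge> 0"
    and iii_3: "\<forall>n\<in>{1..N-1}. \<forall>j\<le>J. e2 (Suc J) (Suc n) + d2 j n + v (Suc J) (Suc n) \<ge> 0"
    and iii_4: "\<forall>n\<in>{1..N-1}.
                 e1 (Suc J) n + e2 (Suc J) (Suc n) - v (Suc J) n + v (Suc J) (Suc n) \<ge> 0"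
  defines "ebar1 \<equiv> \<lambda>n. if n = N then (\<lambda>_. 0) else ext_interp x J (\<lambda>j. e1 j n)"
    and "ebar2 \<equiv> \<lambda>n. if n = 1 then (\<lambda>_. 0) else ext_interp x J (\<lambda>j. e2 j n)"
    and "vbar \<equiv> \<lambda>n. ext_interp x J (\<lambda>j. v j n)"
    and "dt1 \<equiv> \<lambda>n y. if y \<le> x J then mixed_interp x J (\<lambda>j. d1 j n) (\<lambda>j. (e1 (Suc j) n - e1 j n) / (x (Suc j) - x j)) y
                     else min (d1 J n) (e1 (Suc J) n)"
    and "dt2 \<equiv> \<lambda>n y. if y \<le> x J then mixed_interp x J (\<lambda>j. d2 j n) (\<lambda>j. ((e1 (Suc j) n - v (Suc j) n) - (e1 j n - v j n)) / (x (Suc j) - x j)) y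
                     else min (d2 J n) (e1 (Suc J) n - v (Suc J) n)"
  shows "(\<forall>n\<in>{1..N}. \<forall>y\<ge>0. vbar n y \<ge> a y (t n))
       \<and> (\<forall>n\<in>{1..<N}. \<forall>y\<ge>0. \<forall>z\<ge>0.
            ebar1 n y + ebar2 (Suc n) z + (z - y) * dt1 n y \<ge> 0)
       \<and> (\<forall>n\<in>{1..<N}. \<forall>y\<ge>0. \<forall>z\<ge>0.
            ebar1 n y + ebar2 (Suc n) z + (z - y) * dt2 n y - vbar n y + vbar (Suc n) z \<ge> 0)"
proof (intro conjI ballI allI impI)
  fix n and y :: real assume n: "n \<in> {1..N}" and y: "y \<ge> 0"
  show "vbar n y \<ge> a y (t n)"
    unfolding vbar_def
    by (rule vbar_ge[OF x_mono x0 J, of "\<lambda>y. a y (t n)" "ell n"])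
       (use a_convex ell_lim i_a i_l n y in auto)
next
  fix n and y z :: real assume n: "n \<in> {1..<N}" and y: "y \<ge> 0" and z: "z \<ge> 0"
  have n1: "n \<in> {1..N-1}" using n by auto
  have nN: "n \<noteq> N" "Suc n \<noteq> 1" using n by auto
  have "ext_interp x J (\<lambda>j. e1 j n) y + ext_interp x J (\<lambda>j. e2 j (Suc n)) z + (z - y) *
     (if y \<le> x J then mixed_interp x J (\<lambda>j. d1 j n) (\<lambda>j. ((\<lambda>j. e1 j n) (Suc j) - (\<lambda>j. e1 j n) j) / (x (Suc j) - x j)) y
      else min ((\<lambda>j. d1 j n) J) ((\<lambda>j. e1 j n) (Suc J))) \<ge> 0"
    by (rule core[OF x_mono x0 J _ _ _ y z]) (use ii_1 ii_3 ii_4 n1 in auto)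
  then show "ebar1 n y + ebar2 (Suc n) z + (z - y) * dt1 n y \<ge> 0"
    unfolding ebar1_def ebar2_def dt1_def using nN by simp
next
  fix n and y z :: real assume n: "n \<in> {1..<N}" and y: "y \<ge> 0" and z: "z \<ge> 0"
  have n1: "n \<in> {1..N-1}" using n by auto
  have nN: "n \<noteq> N" "Suc n \<noteq> 1" using n by auto
  have L1: "ext_interp x J (\<lambda>j. e1 j n - v j n) y = ext_interp x J (\<lambda>j. e1 j n) y - ext_interp x J (\<lambda>j. v j n) y"
    using ext_lin[of x J "\<lambda>j. e1 j n" "-1" "\<lambda>j. v j n" y] by simp
  have L2: "ext_interp x J (\<lambda>j. e2 j (Suc n) + v j (Suc n)) z = ext_interp x J (\<lambda>j. e2 j (Suc n)) z + ext_interp x J (\<lambda>j. v j (Suc n)) z"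
    using ext_lin[of x J "\<lambda>j. e2 j (Suc n)" "1" "\<lambda>j. v j (Suc n)" z] by simp
  have "ext_interp x J (\<lambda>j. e1 j n - v j n) y + ext_interp x J (\<lambda>j. e2 j (Suc n) + v j (Suc n)) z + (z - y) *
     (if y \<le> x J then mixed_interp x J (\<lambda>j. d2 j n) (\<lambda>j. ((\<lambda>j. e1 j n - v j n) (Suc j) - (\<lambda>j. e1 j n - v j n) j) / (x (Suc j) - x j)) y
      else min ((\<lambda>j. d2 j n) J) ((\<lambda>j. e1 j n - v j n) (Suc J))) \<ge> 0"
    by (rule core[OF x_mono x0 J _ _ _ y z]) (use iii_1 iii_3 iii_4 n1 in \<open>auto simp: algebra_simps\<close>)
  then show "ebar1 n y + ebar2 (Suc n) z + (z - y) * dt2 n y - vbar n y + vbar (Suc n) z \<ge> 0"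
    unfolding ebar1_def ebar2_def dt2_def vbar_def L1 L2 using nN by (simp add: algebra_simps)
qed

end
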